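(* Let $q$ be a prime power, $s\ge 2$, $d\ge 0$ integers, and let $P\in\mathbb{F}_q[x_1,\dots,x_s]$ be a homogeneous polynomial with $\deg(P)=d$. Then there exist $\lfloor q/(d+1)\rfloor^{s-1}$ subsets of $\mathbb{F}_q^s$, each of size $(d+1)^{s-1}$, each of which is an interpolation set of $P$, and which are pairwise disjoint under multiplication.
   Context: A polynomial is homogeneous if all its monomials have the same total degree. A set $R\subseteq\mathbb{F}_q^s$ is an interpolation set of the homogeneous polynomial $P$ of degree $d$ if for every homogeneous polynomial $Q$ of degree $d$ with $P(\boldsymbol{x})=Q(\boldsymbol{x})$ for all $\boldsymbol{x}\in R$, one has $P(\boldsymbol{x})=Q(\boldsymbol{x})$ for all $\boldsymbol{x}\in\mathbb{F}_q^s$. Two sets $S_1,S_2\subseteq\mathbb{F}_q^s$ are disjoint under multiplication if for every $\boldsymbol{x}\in S_1$ and every $\alpha\in\mathbb{F}_q\setminus\{0\}$, $\alpha\boldsymbol{x}\notin S_2$. *)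

theory Defs
  imports Main
begin

text \<open>Points of F_q^s are functions 'n \<Rightarrow> 'a with 'n a finite index type, CARD('n) = s. A polynomial in s variables is represented
  by its coefficient function on exponent vectors.\<close>

definition total_deg :: "('n::finite \<Rightarrow> nat) \<Rightarrow> nat" where
  "total_deg \<alpha> = (\<Sum>i\<in>UNIV. \<alpha> i)"

definition homog_of_deg :: "nat \<Rightarrow> (('n::finite \<Rightarrow> nat) \<Rightarrow> 'a::field) \<Rightarrow> bool" where
  "homog_of_deg d c \<longleftrightarrow> (\<forall>\<alpha>. c \<alpha> \<noteq> 0 \<longrightarrow> total_deg \<alpha> = d)"

definition hpoly_eval :: "nat \<Rightarrow> (('n::finite \<Rightarrow> nat) \<Rightarrow> 'a::field) \<Rightarrow> ('n \<Rightarrow> 'a) \<Rightarrow> 'a" where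
  "hpoly_eval d c x = (\<Sum>\<alpha>\<in>{\<alpha>. total_deg \<alpha> = d}. c \<alpha> * (\<Prod>i\<in>UNIV. x i ^ \<alpha> i))"

definition interpolation_set :: "nat \<Rightarrow> (('n::finite \<Rightarrow> nat) \<Rightarrow> 'a::field) \<Rightarrow> ('n \<Rightarrow> 'a) set \<Rightarrow> bool" where
  "interpolation_set d P R \<longleftrightarrow>
     (\<forall>Q. homog_of_deg d Q \<longrightarrow> (\<forall>x\<in>R. hpoly_eval d P x = hpoly_eval d Q x)
          \<longrightarrow> (\<forall>x. hpoly_eval d P x = hpoly_eval d Q x))"

definition disjoint_under_mult :: "('n \<Rightarrow> 'a::field) set \<Rightarrow> ('n \<Rightarrow> 'a) set \<Rightarrow> bool" where
  "disjoint_under_mult S1 S2 \<longleftrightarrow> (\<forall>x\<in>S1. \<forall>a. a \<noteq> 0 \<longrightarrow> (\<lambda>i. a * x i) \<notin> S2)"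

end

theory Submission
  imports Defs "HOL-Computational_Algebra.Polynomial" "HOL-Library.FuncSet"
begin

lemma lagrange_basis:
  fixes A :: "'a::field set"
  assumes "finite A" "a \<in> A"
  shows "\<exists>L. degree L \<le> card A - 1 \<and> (\<forall>c\<in>A. poly L c = (if c = a then 1 else 0))"
proof -
  define L where "L = smult (inverse (\<Prod>b\<in>A-{a}. a - b)) (\<Prod>b\<in>A-{a}. [:-b,1:])"
  have "degree L \<le> degree (\<Prod>b\<in>A-{a}. [:-b,1:])" unfolding L_def by (rule degree_smult_le)
  also have "\<dots> \<le> card A - 1" using degree_prod_sum_le[of "A-{a}" "\<lambda>b. [:-b,(1::'a):]"] assms
    by (simp add: o_def)
  finally have d: "degree L \<le> card A - 1" .
  have "poly L c = (if c = a then 1 else 0)" if "c \<in> A" for c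
  proof (cases "c = a")
    case True
    have "(\<Prod>b\<in>A-{a}. a - b) \<noteq> 0" using assms by auto
    then show ?thesis using True by (simp add: L_def poly_prod)
  next
    case False
    have "(\<Prod>b\<in>A-{a}. c - b) = 0" using assms that False
      by (metis (no_types, lifting) DiffI finite_Diff prod_zero_iff right_minus_eq singletonD)
    then show ?thesis using False by (simp add: L_def poly_prod)
  qed
  with d show ?thesis by blast
qed

lemma weights:
  fixes A :: "'a::field set"
  assumes "finite A" "card A = d + 1" "e \<le> d"
  shows "\<exists>w. \<forall>f\<le>d. (\<Sum>a\<in>A. w a * a ^ f) = (if f = e then 1 else 0)"
proof -
  have "\<forall>a\<in>A. \<exists>L. degree L \<le> d \<and> (\<forall>c\<in>A. poly L c = (if c = a then 1 else 0))"
    using lagrange_basis[OF assms(1)] assms(2) by simp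
  from bchoice[OF this] obtain L where L0: "\<forall>a\<in>A. degree (L a) \<le> d \<and> (\<forall>c\<in>A. poly (L a) c = (if c = a then 1 else 0))"
    by (elim exE)
  then have L: "\<And>a. a \<in> A \<Longrightarrow> degree (L a) \<le> d \<and> (\<forall>c\<in>A. poly (L a) c = (if c = a then 1 else 0))"
    by blast
  have W: "(\<Sum>a\<in>A. coeff (L a) e * a ^ f) = (if f = e then 1 else 0)" if "f \<le> d" for f
  proof -
    have eq: "monom 1 f = (\<Sum>a\<in>A. smult (a ^ f) (L a))"
    proof (rule poly_eqI_degree[of A])
      fix x assume x: "x \<in> A"
      have "poly (\<Sum>a\<in>A. smult (a ^ f) (L a)) x = (\<Sum>a\<in>A. a ^ f * poly (L a) x)"
        by (simp add: poly_sum)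
      also have "\<dots> = (\<Sum>a\<in>A. if a = x then a ^ f else 0)"
        using L x by (intro sum.cong) auto
      also have "\<dots> = x ^ f" using x assms(1) by simp
      finally show "poly (monom 1 f) x = poly (\<Sum>a\<in>A. smult (a ^ f) (L a)) x"
        by (simp add: poly_monom)
    next
      show "degree (monom (1::'a) f) < card A" using that assms by (simp add: degree_monom_eq)
    next
      have "degree (\<Sum>a\<in>A. smult (a ^ f) (L a)) \<le> d"
        by (rule degree_sum_le) (use L assms(1) in \<open>auto intro: order.trans[OF degree_smult_le]\<close>)
      then show "degree (\<Sum>a\<in>A. smult (a ^ f) (L a)) < card A" using assms by simp
    qed
    have "coeff (monom 1 f) e = (\<Sum>a\<in>A. coeff (L a) e * a ^ f)"
      by (subst eq) (simp add: coeff_sum mult.commute)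
    then show ?thesis by (simp add: coeff_monom)
  qed
  show ?thesis by (rule exI[of _ "\<lambda>a. coeff (L a) e"], intro allI impI, rule W)
qed


lemma PiE_UNIV_iff: "x \<in> Pi\<^sub>E UNIV C \<longleftrightarrow> (\<forall>i. x i \<in> C i)"
  by (simp add: PiE_UNIV_domain Pi_iff)

lemma le_total_deg: "\<alpha> i \<le> total_deg (\<alpha>::'n::finite \<Rightarrow> nat)"
  unfolding total_deg_def by (rule member_le_sum) auto

lemma finite_deg_set: "finite {\<alpha>::'n::finite \<Rightarrow> nat. total_deg \<alpha> = d}"
proof (rule finite_subset)
  show "{\<alpha>::'n \<Rightarrow> nat. total_deg \<alpha> = d} \<subseteq> Pi\<^sub>E UNIV (\<lambda>_. {..d})"
  proof
    fix \<alpha> :: "'n \<Rightarrow> nat" assume "\<alpha> \<in> {\<alpha>. total_deg \<alpha> = d}"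
    then have "\<alpha> i \<le> d" for i using le_total_deg[of \<alpha> i] by simp
    then show "\<alpha> \<in> Pi\<^sub>E UNIV (\<lambda>_. {..d})" by (simp add: PiE_UNIV_iff)
  qed
  show "finite (Pi\<^sub>E (UNIV::'n set) (\<lambda>_. {..d}))" by (rule finite_PiE) auto
qed

lemma interp:
  fixes P :: "('n::finite \<Rightarrow> nat) \<Rightarrow> 'a::field" and C :: "'n \<Rightarrow> 'a set"
  assumes C0: "C i0 = {1}" and C1: "\<And>i. i \<noteq> i0 \<Longrightarrow> finite (C i) \<and> card (C i) = d + 1"
  shows "interpolation_set d P (Pi\<^sub>E UNIV C)"
  unfolding interpolation_set_def
proof (intro allI impI)
  fix Q :: "('n \<Rightarrow> nat) \<Rightarrow> 'a"
  assume van: "\<forall>x\<in>Pi\<^sub>E UNIV C. hpoly_eval d P x = hpoly_eval d Q x"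
  define M where "M = {\<alpha>::'n \<Rightarrow> nat. total_deg \<alpha> = d}"
  have finM: "finite M" unfolding M_def by (rule finite_deg_set)
  have Mle: "\<beta> i \<le> d" if "\<beta> \<in> M" for \<beta> i
    using that le_total_deg[of \<beta> i] unfolding M_def by simp
  have finC: "finite (C i)" for i using C0 C1 by (cases "i = i0") auto
  define D where "D \<beta> = P \<beta> - Q \<beta>" for \<beta>
  have E: "hpoly_eval d P x - hpoly_eval d Q x = (\<Sum>\<beta>\<in>M. D \<beta> * (\<Prod>i\<in>UNIV. x i ^ \<beta> i))" for x
    unfolding hpoly_eval_def M_def D_def by (simp add: sum_subtractf algebra_simps)
  have key: "P \<alpha> = Q \<alpha>" if aM: "\<alpha> \<in> M" for \<alpha>
  proof -
    have "\<forall>i. \<exists>w. \<forall>f\<le>d. (\<Sum>a\<in>C i. w a * a ^ f) = (if i = i0 then 1 else if f = \<alpha> i then 1 else 0)"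
    proof
      fix i show "\<exists>w. \<forall>f\<le>d. (\<Sum>a\<in>C i. w a * a ^ f) = (if i = i0 then 1 else if f = \<alpha> i then 1 else 0)"
      proof (cases "i = i0")
        case True then show ?thesis using C0 by (intro exI[of _ "\<lambda>_. 1"]) simp
      next
        case False
        then show ?thesis using weights[of "C i" d "\<alpha> i"] C1[OF False] Mle[OF aM] by simp
      qed
    qed
    then obtain w where w: "\<And>i f. f \<le> d \<Longrightarrow> (\<Sum>a\<in>C i. w i a * a ^ f) = (if i = i0 then 1 else if f = \<alpha> i then 1 else 0)"
      by metis
    have "0 = (\<Sum>x\<in>Pi\<^sub>E UNIV C. (\<Prod>i\<in>UNIV. w i (x i)) * (hpoly_eval d P x - hpoly_eval d Q x))"
      using van by simp
    also have "\<dots> = (\<Sum>x\<in>Pi\<^sub>E UNIV C. \<Sum>\<beta>\<in>M. D \<beta> * (\<Prod>i\<in>UNIV. w i (x i) * x i ^ \<beta> i))"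
      by (simp add: E sum_distrib_left prod.distrib mult_ac)
    also have "\<dots> = (\<Sum>\<beta>\<in>M. D \<beta> * (\<Sum>x\<in>Pi\<^sub>E UNIV C. \<Prod>i\<in>UNIV. w i (x i) * x i ^ \<beta> i))"
      by (subst sum.swap) (simp add: sum_distrib_left)
    also have "\<dots> = (\<Sum>\<beta>\<in>M. D \<beta> * (\<Prod>i\<in>UNIV. \<Sum>a\<in>C i. w i a * a ^ \<beta> i))"
      by (intro sum.cong refl arg_cong2[where f="(*)"] prod_sum_PiE[symmetric]) (auto simp: finC)
    also have "\<dots> = (\<Sum>\<beta>\<in>M. D \<beta> * (\<Prod>i\<in>UNIV. if i = i0 then 1 else if \<beta> i = \<alpha> i then 1 else 0))"
      by (intro sum.cong refl arg_cong2[where f="(*)"] prod.cong) (auto simp: w Mle)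
    also have "\<dots> = (\<Sum>\<beta>\<in>M. if \<beta> = \<alpha> then D \<beta> else 0)"
    proof (intro sum.cong refl)
      fix \<beta> assume bM: "\<beta> \<in> M"
      show "D \<beta> * (\<Prod>i\<in>UNIV. if i = i0 then 1 else if \<beta> i = \<alpha> i then 1 else 0) = (if \<beta> = \<alpha> then D \<beta> else 0)"
      proof (cases "\<forall>i. i \<noteq> i0 \<longrightarrow> \<beta> i = \<alpha> i")
        case True
        have "total_deg \<beta> = \<beta> i0 + (\<Sum>i\<in>UNIV-{i0}. \<beta> i)" unfolding total_deg_def
          by (simp add: sum.remove)
        moreover have "total_deg \<alpha> = \<alpha> i0 + (\<Sum>i\<in>UNIV-{i0}. \<alpha> i)" unfolding total_deg_def
          by (simp add: sum.remove)
        moreover have "(\<Sum>i\<in>UNIV-{i0}. \<beta> i) = (\<Sum>i\<in>UNIV-{i0}. \<alpha> i)" using True by (intro sum.cong) auto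
        ultimately have "\<beta> i0 = \<alpha> i0" using aM bM unfolding M_def by simp
        with True have ba: "\<beta> = \<alpha>" by (metis ext)
        have "(\<Prod>i\<in>UNIV. if i = i0 then 1 else if \<beta> i = \<alpha> i then 1 else (0::'a)) = 1"
          using True by (intro prod.neutral) auto
        then show ?thesis using ba by simp
      next
        case False
        then obtain i where "i \<noteq> i0" "\<beta> i \<noteq> \<alpha> i" by blast
        then have "(\<Prod>i\<in>UNIV. if i = i0 then 1 else if \<beta> i = \<alpha> i then 1 else (0::'a)) = 0"
          by (intro prod_zero) auto
        moreover have "\<beta> \<noteq> \<alpha>" using False by auto
        ultimately show ?thesis by simp
      qed
    qed
    also have "\<dots> = D \<alpha>" using aM finM by simp
    finally show ?thesis unfolding D_def by simp
  qed
  show "hpoly_eval d P x = hpoly_eval d Q x" for x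
    unfolding hpoly_eval_def using key unfolding M_def by (auto intro!: sum.cong)
qed

theorem lemma3:
  fixes P :: "('n::finite \<Rightarrow> nat) \<Rightarrow> 'a::{finite,field}"
    and d :: nat
  assumes "card (UNIV :: 'n set) \<ge> 2"
    and "homog_of_deg d P"
    and "\<exists>\<alpha>. P \<alpha> \<noteq> 0"
  shows "\<exists>S :: nat \<Rightarrow> ('n \<Rightarrow> 'a) set.
           (\<forall>j < (card (UNIV :: 'a set) div (d + 1)) ^ (card (UNIV :: 'n set) - 1).
               card (S j) = (d + 1) ^ (card (UNIV :: 'n set) - 1) \<and> interpolation_set d P (S j)) \<and>
           (\<forall>j < (card (UNIV :: 'a set) div (d + 1)) ^ (card (UNIV :: 'n set) - 1).
              \<forall>k < (card (UNIV :: 'a set) div (d + 1)) ^ (card (UNIV :: 'n set) - 1).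
                 j \<noteq> k \<longrightarrow> disjoint_under_mult (S j) (S k))"
proof -
  define q where "q = card (UNIV :: 'a set)"
  define m where "m = q div (d + 1)"
  define s where "s = card (UNIV :: 'n set)"
  obtain i0 :: 'n where True by blast
  obtain f where f: "bij_betw f {0..<q} (UNIV :: 'a set)"
    using ex_bij_betw_nat_finite[of "UNIV :: 'a set"] unfolding q_def by auto
  have finj: "inj_on f {0..<q}" using f by (simp add: bij_betw_def)
  define B where "B t = f ` {t*(d+1)..<(t+1)*(d+1)}" for t
  have sub: "{t*(d+1)..<(t+1)*(d+1)} \<subseteq> {0..<q}" if "t < m" for t
  proof -
    have "(t+1)*(d+1) \<le> m*(d+1)" using that by (intro mult_le_mono1) simp
    also have "\<dots> \<le> q" unfolding m_def by (rule div_times_less_eq_dividend)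
    finally have le: "(t+1)*(d+1) \<le> q" .
    show ?thesis
    proof (rule subsetI)
      fix x assume "x \<in> {t*(d+1)..<(t+1)*(d+1)}"
      then have "x < (t+1)*(d+1)" by simp
      with le show "x \<in> {0..<q}" by simp
    qed
  qed
  have Bcard: "finite (B t) \<and> card (B t) = d + 1" if "t < m" for t
  proof -
    have "card (B t) = card {t*(d+1)..<(t+1)*(d+1)}"
      unfolding B_def by (rule card_image[OF inj_on_subset[OF finj sub[OF that]]])
    also have "\<dots> = (t+1)*(d+1) - t*(d+1)" by (rule card_atLeastLessThan)
    also have "\<dots> = d + 1" by (simp add: algebra_simps)
    finally show ?thesis unfolding B_def by simp
  qed
  have Bdisj: "False" if H: "t < m" "t' < m" "t \<noteq> t'" "y \<in> B t" "y \<in> B t'" for t t' y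
  proof -
    obtain u where u: "u \<in> {t*(d+1)..<(t+1)*(d+1)}" "y = f u" using H(4) unfolding B_def by blast
    obtain u' where u': "u' \<in> {t'*(d+1)..<(t'+1)*(d+1)}" "y = f u'" using H(5) unfolding B_def by blast
    have uq: "u \<in> {0..<q}" using sub[OF H(1)] u(1) by (rule subsetD)
    have uq': "u' \<in> {0..<q}" using sub[OF H(2)] u'(1) by (rule subsetD)
    have "f u = f u'" using u(2) u'(2) by simp
    then have "u = u'" by (rule inj_onD[OF finj _ uq uq'])
    have dv: "u div (d+1) = t" if "v \<in> {t*(d+1)..<(t+1)*(d+1)}" "u = v" for v t
    proof -
      have a1: "(d+1) * t \<le> v" using that(1) by (simp add: mult.commute)
      have a2: "v < (d+1) * Suc t" using that(1) by (simp add: mult.commute)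
      show ?thesis unfolding that(2) by (rule div_nat_eqI[OF a1 a2])
    qed
    have "u div (d+1) = t" by (rule dv[OF u(1) refl])
    moreover have "u div (d+1) = t'" by (rule dv[OF u'(1) \<open>u = u'\<close>])
    ultimately show False using \<open>u = u'\<close> H(3) by simp
  qed
  define I where "I = (UNIV :: 'n set) - {i0}"
  have cardI: "card I = s - 1" unfolding I_def s_def by (simp add: card_Diff_singleton)
  define T where "T = Pi\<^sub>E I (\<lambda>_. {..<m})"
  have "card T = m ^ (s - 1)" unfolding T_def by (simp add: card_PiE I_def s_def)
  then obtain h where h: "bij_betw h {0..<m ^ (s - 1)} T"
    using ex_bij_betw_nat_finite[of T] unfolding T_def by (metis finite_PiE finite_class.finite_UNIV finite_lessThan finite_subset subset_UNIV)
  define S where "S j = Pi\<^sub>E UNIV (\<lambda>i. if i = i0 then {1} else B (h j i))" for j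
  have hT: "h j \<in> T" if "j < m ^ (s - 1)" for j using h that by (auto simp: bij_betw_def)
  have hm: "h j i < m" if "j < m ^ (s - 1)" "i \<noteq> i0" for j i
    using hT[OF that(1)] that(2) unfolding T_def I_def by (auto simp: PiE_iff)
  have P1: "card (S j) = (d + 1) ^ (s - 1) \<and> interpolation_set d P (S j)" if j: "j < m ^ (s - 1)" for j
  proof
    have "card (S j) = (\<Prod>i\<in>UNIV. card (if i = i0 then {1::'a} else B (h j i)))"
      unfolding S_def by (simp add: card_PiE)
    also have "\<dots> = card (if i0 = i0 then {1::'a} else B (h j i0)) * (\<Prod>i\<in>UNIV-{i0}. card (if i = i0 then {1::'a} else B (h j i)))"
      by (rule prod.remove) auto
    also have "\<dots> = 1 * (\<Prod>i\<in>UNIV-{i0}. d + 1)"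
      by (intro arg_cong2[where f="(*)"] prod.cong refl) (auto simp: Bcard hm[OF j])
    also have "\<dots> = (d + 1) ^ (s - 1)" using cardI unfolding I_def by simp
    finally show "card (S j) = (d + 1) ^ (s - 1)" by simp
    show "interpolation_set d P (S j)" unfolding S_def
      by (rule interp[where ?i0.0=i0]) (auto simp: Bcard hm[OF j])
  qed
  have P2: "disjoint_under_mult (S j) (S k)" if jk: "j < m ^ (s - 1)" "k < m ^ (s - 1)" "j \<noteq> k" for j k
    unfolding disjoint_under_mult_def
  proof (intro ballI allI impI notI)
    fix x a assume x: "x \<in> S j" and a: "a \<noteq> 0" and ax: "(\<lambda>i. a * x i) \<in> S k"
    have xS: "x i \<in> (if i = i0 then {1} else B (h j i))" for i
      using x unfolding S_def PiE_UNIV_iff by blast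
    have axS: "a * x i \<in> (if i = i0 then {1} else B (h k i))" for i
      using ax unfolding S_def PiE_UNIV_iff by blast
    have x0: "x i0 = 1" using xS[of i0] by simp
    have "a * x i0 = 1" using axS[of i0] by simp
    with x0 have "a = 1" by simp
    have "h j \<noteq> h k"
    proof
      assume "h j = h k"
      then have "j = k" by (rule inj_onD[OF bij_betw_imp_inj_on[OF h]]) (use jk in simp_all)
      with jk(3) show False by simp
    qed
    then obtain i where i: "h j i \<noteq> h k i" unfolding fun_eq_iff by blast
    have "i \<in> I"
    proof (rule ccontr)
      assume "i \<notin> I"
      have "h j i = undefined" using hT[OF jk(1)] \<open>i \<notin> I\<close> unfolding T_def by (rule PiE_arb)
      moreover have "h k i = undefined" using hT[OF jk(2)] \<open>i \<notin> I\<close> unfolding T_def by (rule PiE_arb)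
      ultimately show False using i by simp
    qed
    then have "i \<noteq> i0" unfolding I_def by simp
    have "x i \<in> B (h j i)" using xS[of i] \<open>i \<noteq> i0\<close> by simp
    moreover have "x i \<in> B (h k i)" using axS[of i] \<open>i \<noteq> i0\<close> \<open>a = 1\<close> by simp
    ultimately show False by (rule Bdisj[OF hm[OF jk(1) \<open>i \<noteq> i0\<close>] hm[OF jk(2) \<open>i \<noteq> i0\<close>] i])
  qed
  have "\<exists>S. (\<forall>j < m ^ (s - 1). card (S j) = (d + 1) ^ (s - 1) \<and> interpolation_set d P (S j)) \<and>
           (\<forall>j < m ^ (s - 1). \<forall>k < m ^ (s - 1). j \<noteq> k \<longrightarrow> disjoint_under_mult (S j) (S k))"
    using P1 P2 by blast
  then show ?thesis unfolding m_def q_def s_def .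
qed

end
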